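(* For all $a,b>0$ and $0\le v\le 1$, $$L(a,b)\le \frac{1}{2}A_v(a,b)+\frac{1}{2}G_{1-v}(a,b).$$
   Context: For $a,b>0$ and $0\le v\le 1$: $A_v(a,b):=(1-v)a+vb$, $G_v(a,b):=a^{1-v}b^v$ (so $G_{1-v}(a,b)=a^vb^{1-v}$). The logarithmic mean is $L(a,b):=\frac{a-b}{\log a-\log b}$ for $a\ne b$ and $L(a,a):=a$. *)

theory Defs
  imports Complex_Main
begin

definition wam :: "real \<Rightarrow> real \<Rightarrow> real \<Rightarrow> real" where
  "wam v a b = (1 - v) * a + v * b"

definition wgm :: "real \<Rightarrow> real \<Rightarrow> real \<Rightarrow> real" where
  "wgm v a b = a powr (1 - v) * b powr v"

definition logmean :: "real \<Rightarrow> real \<Rightarrow> real" where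
  "logmean a b = (if a = b then a else (a - b) / (ln a - ln b))"

end

theory Submission
  imports Defs
begin

lemma core_deriv:
  fixes t :: real
  shows "((\<lambda>x. x*(1+exp x) - 2*(exp x - 1)) has_real_derivative 1 - exp t + t * exp t) (at t)"
proof -
  have "((\<lambda>x::real. x*(1+exp x) - 2*(exp x - 1)) has_real_derivative (1*(1+exp t) + (0 + exp t)*t) - 2*(exp t - 0)) (at t)"
    by (intro DERIV_diff DERIV_mult DERIV_cmult DERIV_add DERIV_exp DERIV_ident DERIV_const)
  then show ?thesis by (simp add: algebra_simps)
qed

lemma core_nonneg:
  fixes t :: real
  shows "1 - exp t + t * exp t \<ge> 0"
proof -
  have "1 + (-t) \<le> exp (-t)" by (rule exp_ge_add_one_self)
  then have "exp t * (1 - t) \<le> exp t * exp (-t)" by (simp add: mult_left_mono)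
  then have "exp t * (1 - t) \<le> 1" by (simp add: exp_minus field_simps)
  then show ?thesis by (simp add: algebra_simps)
qed

lemma core_mono:
  fixes x y :: real
  assumes "x \<le> y"
  shows "x*(1+exp x) - 2*(exp x - 1) \<le> y*(1+exp y) - 2*(exp y - 1)"
  using deriv_nonneg_imp_mono[where g="\<lambda>x. x*(1+exp x) - 2*(exp x - 1)" and g'="\<lambda>t. 1 - exp t + t * exp t", OF core_deriv core_nonneg assms]
  by simp

lemma piece:
  fixes P k s :: real
  assumes P: "P > 0" and k: "k \<ge> 0" and s: "s \<noteq> 0"
  shows "(P*exp(k*s) - P)/s \<le> k*(P + P*exp(k*s))/2"
proof (cases "s > 0")
  case True
  have "k*s \<ge> 0" using True k by simp
  from core_mono[OF this] have f: "2*(exp (k*s) - 1) \<le> (k*s)*(1+exp (k*s))" by simp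
  have "P*(2*(exp (k*s) - 1)) \<le> P*((k*s)*(1+exp (k*s)))" using f P by (simp add: mult_left_mono)
  then show ?thesis using True by (simp add: field_simps)
next
  case False
  then have sn: "s < 0" using s by simp
  have "k*s \<le> 0" using sn k by (simp add: mult_nonneg_nonpos)
  from core_mono[OF this] have f: "2*(exp (k*s) - 1) \<ge> (k*s)*(1+exp (k*s))" by simp
  have "P*(2*(exp (k*s) - 1)) \<ge> P*((k*s)*(1+exp (k*s)))" using f P by (simp add: mult_left_mono)
  then show ?thesis using sn by (simp add: field_simps)
qed

theorem theorem2p5:
  fixes a b v :: real
  assumes "a > 0" and "b > 0" and "0 \<le> v" and "v \<le> 1"
  shows "logmean a b \<le> wam v a b / 2 + wgm (1 - v) a b / 2"
proof (cases "a = b")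
  case True
  then show ?thesis using assms
    by (simp add: logmean_def wam_def wgm_def powr_add[symmetric] algebra_simps)
next
  case False
  define s where "s = ln b - ln a"
  have s0: "s \<noteq> 0" using False assms by (simp add: s_def)
  define m where "m = a powr v * b powr (1 - v)"
  have "m = exp (v * ln a) * exp ((1-v) * ln b)" using assms
    by (simp add: m_def powr_def mult.commute)
  then have m: "m = exp (v * ln a + (1-v) * ln b)" by (simp add: exp_add)
  have m1: "m = a * exp ((1-v)*s)" using assms
    by (simp add: m s_def exp_add exp_diff algebra_simps)
  have m2: "b = m * exp (v*s)" using assms
    by (simp add: m s_def exp_add[symmetric] algebra_simps)
  have mpos: "m > 0" by (simp add: m)
  have p1: "(m - a)/s \<le> (1-v)*(a + m)/2"
    using piece[OF assms(1) _ s0, of "1-v"] assms m1 by simp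
  have p2: "(b - m)/s \<le> v*(m + b)/2"
    using piece[OF mpos assms(3) s0] m2 by simp
  have L: "logmean a b = (m - a)/s + (b - m)/s"
  proof -
    have "logmean a b = (-(b - a))/(-s)" using False
      by (simp add: logmean_def s_def)
    also have "... = (b - a)/s" by (rule minus_divide_divide)
    also have "... = (m - a)/s + (b - m)/s" by (simp add: diff_divide_distrib)
    finally show ?thesis .
  qed
  have R: "wam v a b / 2 + wgm (1 - v) a b / 2 = (1-v)*(a + m)/2 + v*(m + b)/2"
    by (simp add: wam_def wgm_def m_def field_simps)
  show ?thesis using L R p1 p2 by linarith
qed

end
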